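(* Let $\mathcal{X}$ be a compact 2-dimensional Riemannian manifold embedded in $\mathbb{R}^3$, let $\{\phi_k\}_{k\in\mathbb{N}}$ be an orthonormal basis of $L^2(\mathcal{X})$ consisting of Laplace–Beltrami eigenfunctions ($\Delta\phi_k=\lambda_k\phi_k$, ordered by eigenvalue), and let $X\in L^2(\mathcal{X},\mathbb{R}^3)$ be the coordinate function of $\mathcal{X}$. For $\sigma>0$ and $K>0$ define the shell operator $$\mathcal{S}_K(X):=\sum_{k=1}^{\infty}\frac{1}{1+\exp\bigl(\sigma(k-K)\bigr)}\,\langle \phi_k, X\rangle_{L^2}\,\phi_k,$$ where $\langle\phi_k,X\rangle_{L^2}\in\mathbb{R}^3$ is taken componentwise. Then, whenever $\mathcal{S}_{K+1}(X)\neq 0$, $$\frac{\bigl\|\mathcal{S}_{K+1}(X)-\mathcal{S}_{K}(X)\bigr\|_{L^2}}{\bigl\|\mathcal{S}_{K+1}(X)\bigr\|_{L^2}}\leq|1-e^{-\sigma}|,$$ and $|1-e^{-\sigma}|=\mathcal{O}(\sigma)$ as $\sigma\to 0$.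
   Context: The $L^2$ norm of an $\mathbb{R}^3$-valued function is $\|f\|_{L^2}^2=\int_{\mathcal{X}}|f|^2$, with $|\cdot|$ the Euclidean norm. The parameter $\sigma$ is called the upsampling variance; $\mathcal{S}_K(X)$ is a smoothed version of the coordinate function obtained by sigmoid-weighted projection onto the Laplace–Beltrami eigenfunctions. *)

theory Defs
  imports "HOL-Analysis.Analysis" "HOL-Library.Landau_Symbols"
begin

definition L2norm :: "'a measure \<Rightarrow> ('a \<Rightarrow> 'b::real_normed_vector) \<Rightarrow> real" where
  "L2norm M f = sqrt (LINT x|M. (norm (f x))\<^sup>2)"

definition sq_integrable :: "'a measure \<Rightarrow> ('a \<Rightarrow> 'b::{real_normed_vector, second_countable_topology}) \<Rightarrow> bool" where
  "sq_integrable M f \<longleftrightarrow> f \<in> borel_measurable M \<and> integrable M (\<lambda>x. (norm (f x))\<^sup>2)"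

definition L2coef :: "'a measure \<Rightarrow> ('a \<Rightarrow> real) \<Rightarrow> ('a \<Rightarrow> 'b::{banach, second_countable_topology}) \<Rightarrow> 'b" where
  "L2coef M g f = (LINT x|M. g x *\<^sub>R f x)"

definition L2_orthonormal_basis :: "'a measure \<Rightarrow> (nat \<Rightarrow> 'a \<Rightarrow> real) \<Rightarrow> bool" where
  "L2_orthonormal_basis M \<phi> \<longleftrightarrow>
     (\<forall>k\<ge>1. sq_integrable M (\<phi> k)) \<and>
     (\<forall>i\<ge>1. \<forall>j\<ge>1. (LINT x|M. \<phi> i x * \<phi> j x) = (if i = j then 1 else 0)) \<and>
     (\<forall>f::'a \<Rightarrow> real. sq_integrable M f \<longrightarrow>
        (\<lambda>n. L2norm M (\<lambda>x. f x - (\<Sum>k\<in>{1..n}. L2coef M (\<phi> k) f * \<phi> k x))) \<longlonglongrightarrow> 0)"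

definition shell_weight :: "real \<Rightarrow> real \<Rightarrow> nat \<Rightarrow> real" where
  "shell_weight \<sigma> K k = 1 / (1 + exp (\<sigma> * (real k - K)))"

definition shell_partial ::
  "'a measure \<Rightarrow> (nat \<Rightarrow> 'a \<Rightarrow> real) \<Rightarrow> real \<Rightarrow> real \<Rightarrow> ('a \<Rightarrow> 'b::{banach, second_countable_topology}) \<Rightarrow> nat \<Rightarrow> 'a \<Rightarrow> 'b" where
  "shell_partial M \<phi> \<sigma> K X n = (\<lambda>x. \<Sum>k\<in>{1..n}. (shell_weight \<sigma> K k * \<phi> k x) *\<^sub>R L2coef M (\<phi> k) X)"

text \<open>S is (a representative of) the shell operator S_K(X): the L2 limit of the partial sums.\<close>
definition is_shell ::
  "'a measure \<Rightarrow> (nat \<Rightarrow> 'a \<Rightarrow> real) \<Rightarrow> real \<Rightarrow> real \<Rightarrow> ('a \<Rightarrow> 'b::{banach, second_countable_topology}) \<Rightarrow> ('a \<Rightarrow> 'b) \<Rightarrow> bool" where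
  "is_shell M \<phi> \<sigma> K X S \<longleftrightarrow> sq_integrable M S \<and>
     (\<lambda>n. L2norm M (\<lambda>x. S x - shell_partial M \<phi> \<sigma> K X n x)) \<longlonglongrightarrow> 0"

end

theory Submission imports Defs begin

lemma sq_ineq: "(a + b::real)\<^sup>2 \<le> 2 * a\<^sup>2 + 2 * b\<^sup>2"
proof -
  have "0 \<le> (a - b)\<^sup>2" by simp
  then show ?thesis by (simp add: power2_eq_square algebra_simps)
qed

lemma sqi_add:
  fixes f g :: "'a \<Rightarrow> 'b::euclidean_space"
  assumes "sq_integrable M f" "sq_integrable M g"
  shows "sq_integrable M (\<lambda>x. f x + g x)"
proof -
  have mf: "f \<in> borel_measurable M" and mg: "g \<in> borel_measurable M"
    and i1: "integrable M (\<lambda>x. (norm (f x))\<^sup>2)" and i2: "integrable M (\<lambda>x. (norm (g x))\<^sup>2)"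
    using assms by (auto simp: sq_integrable_def)
  have m: "(\<lambda>x. f x + g x) \<in> borel_measurable M" using mf mg by simp
  have m2: "(\<lambda>x. (norm (f x + g x))\<^sup>2) \<in> borel_measurable M" using m by simp
  have ib: "integrable M (\<lambda>x. 2 * (norm (f x))\<^sup>2 + 2 * (norm (g x))\<^sup>2)" using i1 i2 by simp
  have ae: "AE x in M. norm ((norm (f x + g x))\<^sup>2) \<le> norm (2 * (norm (f x))\<^sup>2 + 2 * (norm (g x))\<^sup>2)"
  proof (rule AE_I2)
    fix x
    have a: "norm (f x + g x) \<le> norm (f x) + norm (g x)" by (rule norm_triangle_ineq)
    have "(norm (f x + g x))\<^sup>2 \<le> (norm (f x) + norm (g x))\<^sup>2"
      using a by (simp add: power_mono)
    also have "\<dots> \<le> 2 * (norm (f x))\<^sup>2 + 2 * (norm (g x))\<^sup>2"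
      by (rule sq_ineq)
    finally show "norm ((norm (f x + g x))\<^sup>2) \<le> norm (2 * (norm (f x))\<^sup>2 + 2 * (norm (g x))\<^sup>2)" by simp
  qed
  have "integrable M (\<lambda>x. (norm (f x + g x))\<^sup>2)"
    by (rule Bochner_Integration.integrable_bound[OF ib m2 ae])
  then show ?thesis using m by (simp add: sq_integrable_def)
qed

lemma sqi_scaleR:
  fixes f :: "'a \<Rightarrow> 'b::euclidean_space"
  assumes "sq_integrable M f"
  shows "sq_integrable M (\<lambda>x. r *\<^sub>R f x)"
proof -
  have "(\<lambda>x. r *\<^sub>R f x) \<in> borel_measurable M"
    by (intro borel_measurable_scaleR) (use assms in \<open>auto simp: sq_integrable_def\<close>)
  then show ?thesis using assms by (simp add: sq_integrable_def power_mult_distrib)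
qed

lemma sqi_diff:
  fixes f g :: "'a \<Rightarrow> 'b::euclidean_space"
  assumes "sq_integrable M f" "sq_integrable M g"
  shows "sq_integrable M (\<lambda>x. f x - g x)"
  using sqi_add[OF assms(1) sqi_scaleR[OF assms(2), of "-1"]] by simp

lemma sqi_sum:
  fixes f :: "nat \<Rightarrow> 'a \<Rightarrow> 'b::euclidean_space"
  assumes "\<And>k. k \<in> I \<Longrightarrow> sq_integrable M (f k)"
  shows "sq_integrable M (\<lambda>x. \<Sum>k\<in>I. f k x)"
  using assms
proof (induction I rule: infinite_finite_induct)
  case (infinite A) then show ?case by (simp add: sq_integrable_def)
next
  case empty then show ?case by (simp add: sq_integrable_def)
next
  case (insert k F)
  then show ?case by (simp add: sqi_add)
qed

lemma sqi_term:
  fixes c :: "'b::euclidean_space"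
  assumes "sq_integrable M (g :: 'a \<Rightarrow> real)"
  shows "sq_integrable M (\<lambda>x. (a * g x) *\<^sub>R c)"
proof -
  have "(\<lambda>x. (a * g x) *\<^sub>R c) \<in> borel_measurable M"
    by (intro borel_measurable_scaleR) (use assms in \<open>auto simp: sq_integrable_def\<close>)
  then show ?thesis using assms by (simp add: sq_integrable_def power_mult_distrib)
qed

lemma int_inner:
  fixes f g :: "'a \<Rightarrow> 'b::euclidean_space"
  assumes "sq_integrable M f" "sq_integrable M g"
  shows "integrable M (\<lambda>x. f x \<bullet> g x)"
proof -
  have mf: "f \<in> borel_measurable M" and mg: "g \<in> borel_measurable M"
    and i1: "integrable M (\<lambda>x. (norm (f x))\<^sup>2)" and i2: "integrable M (\<lambda>x. (norm (g x))\<^sup>2)"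
    using assms by (auto simp: sq_integrable_def)
  have ib: "integrable M (\<lambda>x. (norm (f x))\<^sup>2 + (norm (g x))\<^sup>2)" using i1 i2 by simp
  have m: "(\<lambda>x. f x \<bullet> g x) \<in> borel_measurable M" using mf mg by simp
  have ae: "AE x in M. norm (f x \<bullet> g x) \<le> norm ((norm (f x))\<^sup>2 + (norm (g x))\<^sup>2)"
  proof (rule AE_I2)
    fix x
    have "\<bar>f x \<bullet> g x\<bar> \<le> norm (f x) * norm (g x)" by (rule Cauchy_Schwarz_ineq2)
    also have "\<dots> \<le> (norm (f x))\<^sup>2 + (norm (g x))\<^sup>2"
    proof -
      have "0 \<le> (norm (f x) - norm (g x))\<^sup>2" by simp
      then have "2 * (norm (f x) * norm (g x)) \<le> (norm (f x))\<^sup>2 + (norm (g x))\<^sup>2"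
        by (simp add: power2_eq_square algebra_simps)
      moreover have "0 \<le> norm (f x) * norm (g x)" by simp
      ultimately show ?thesis by linarith
    qed
    finally show "norm (f x \<bullet> g x) \<le> norm ((norm (f x))\<^sup>2 + (norm (g x))\<^sup>2)" by simp
  qed
  show ?thesis by (rule Bochner_Integration.integrable_bound[OF ib m ae])
qed

lemma cs_real:
  fixes A B C :: real
  assumes q: "\<And>t. 0 \<le> A + 2 * t * B + t\<^sup>2 * C" and A: "A \<ge> 0" and C: "C \<ge> 0"
  shows "B \<le> sqrt A * sqrt C"
proof (cases "B \<le> 0")
  case True then show ?thesis using A C by (smt (verit) mult_nonneg_nonneg real_sqrt_ge_zero)
next
  case False
  show ?thesis
  proof (cases "C = 0")
    case True
    have "0 \<le> A + 2 * (- (A + 1) / (2 * B)) * B" using q[of "- (A + 1) / (2 * B)"] True by simp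
    also have "\<dots> = -1" using False by (simp add: field_simps)
    finally show ?thesis by simp
  next
    case Cn: False
    then have Cp: "C > 0" using C by simp
    have "0 \<le> A + 2 * (- B / C) * B + (- B / C)\<^sup>2 * C" by (rule q)
    also have "\<dots> = A - B\<^sup>2 / C" using Cp by (simp add: field_simps power2_eq_square)
    finally have "B\<^sup>2 \<le> A * C" using Cp by (simp add: field_simps)
    then have "sqrt (B\<^sup>2) \<le> sqrt (A * C)" by (rule real_sqrt_le_mono)
    then show ?thesis using False by (simp add: real_sqrt_mult)
  qed
qed

lemma L2_tri_add:
  fixes f g :: "'a \<Rightarrow> 'b::euclidean_space"
  assumes f: "sq_integrable M f" and g: "sq_integrable M g"
  shows "L2norm M (\<lambda>x. f x + g x) \<le> L2norm M f + L2norm M g"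
proof -
  define A where "A = (LINT x|M. (norm (f x))\<^sup>2)"
  define B where "B = (LINT x|M. f x \<bullet> g x)"
  define C where "C = (LINT x|M. (norm (g x))\<^sup>2)"
  have i1: "integrable M (\<lambda>x. (norm (f x))\<^sup>2)" and i2: "integrable M (\<lambda>x. (norm (g x))\<^sup>2)"
    using f g by (auto simp: sq_integrable_def)
  have i3: "integrable M (\<lambda>x. f x \<bullet> g x)" by (rule int_inner[OF f g])
  have exp: "(LINT x|M. (norm (f x + t *\<^sub>R g x))\<^sup>2) = A + 2 * t * B + t\<^sup>2 * C" for t
  proof -
    have "(\<lambda>x. (norm (f x + t *\<^sub>R g x))\<^sup>2) = (\<lambda>x. (norm (f x))\<^sup>2 + (2 * t) * (f x \<bullet> g x) + t\<^sup>2 * (norm (g x))\<^sup>2)"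
      unfolding power2_norm_eq_inner
      by (simp add: inner_add_left inner_add_right inner_commute power2_eq_square algebra_simps)
    then show ?thesis using i1 i2 i3 by (simp add: A_def B_def C_def)
  qed
  have A0: "A \<ge> 0" unfolding A_def by simp
  have C0: "C \<ge> 0" unfolding C_def by simp
  have "B \<le> sqrt A * sqrt C"
  proof (rule cs_real[OF _ A0 C0])
    fix t show "0 \<le> A + 2 * t * B + t\<^sup>2 * C" unfolding exp[of t, symmetric] by (rule integral_nonneg_AE) simp
  qed
  then have "A + 2 * 1 * B + 1\<^sup>2 * C \<le> (sqrt A + sqrt C)\<^sup>2"
    using A0 C0 by (simp add: power2_sum)
  then have "sqrt (A + 2 * 1 * B + 1\<^sup>2 * C) \<le> sqrt ((sqrt A + sqrt C)\<^sup>2)"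
    by (rule real_sqrt_le_mono)
  also have "\<dots> = sqrt A + sqrt C" using A0 C0 by simp
  finally have "sqrt (A + 2 * 1 * B + 1\<^sup>2 * C) \<le> sqrt A + sqrt C" .
  then show ?thesis using exp[of 1] by (simp add: L2norm_def A_def C_def)
qed

lemma partial_sq:
  fixes c :: "nat \<Rightarrow> 'b::euclidean_space" and \<phi> :: "nat \<Rightarrow> 'a \<Rightarrow> real"
  assumes ob: "L2_orthonormal_basis M \<phi>"
  shows "(LINT x|M. (norm (\<Sum>k\<in>{1..n}. (a k * \<phi> k x) *\<^sub>R c k))\<^sup>2) = (\<Sum>k\<in>{1..n}. (a k)\<^sup>2 * (norm (c k))\<^sup>2)"
proof -
  have phi: "\<And>k. k \<ge> 1 \<Longrightarrow> sq_integrable M (\<phi> k)"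
    and orth: "\<And>i j. i \<ge> 1 \<Longrightarrow> j \<ge> 1 \<Longrightarrow> (LINT x|M. \<phi> i x * \<phi> j x) = (if i = j then 1 else 0)"
    using ob by (auto simp: L2_orthonormal_basis_def)
  have pw: "(\<lambda>x. (norm (\<Sum>k\<in>{1..n}. (a k * \<phi> k x) *\<^sub>R c k))\<^sup>2) =
     (\<lambda>x. \<Sum>i\<in>{1..n}. \<Sum>j\<in>{1..n}. (a i * a j * (c i \<bullet> c j)) * (\<phi> i x * \<phi> j x))"
    unfolding power2_norm_eq_inner
    by (simp add: inner_sum_left inner_sum_right sum_distrib_left algebra_simps inner_commute)
  have int: "integrable M (\<lambda>x. \<phi> i x * \<phi> j x)" if "i \<in> {1..n}" "j \<in> {1..n}" for i j
    using int_inner[OF phi phi, of i j] that by (simp add: inner_real_def)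
  have "integral\<^sup>L M (\<lambda>x. \<Sum>i\<in>{1..n}. \<Sum>j\<in>{1..n}. (a i * a j * (c i \<bullet> c j)) * (\<phi> i x * \<phi> j x))
      = (\<Sum>i\<in>{1..n}. \<Sum>j\<in>{1..n}. (a i * a j * (c i \<bullet> c j)) * (LINT x|M. \<phi> i x * \<phi> j x))"
  proof -
    have "integral\<^sup>L M (\<lambda>x. \<Sum>i\<in>{1..n}. \<Sum>j\<in>{1..n}. (a i * a j * (c i \<bullet> c j)) * (\<phi> i x * \<phi> j x))
       = (\<Sum>i\<in>{1..n}. integral\<^sup>L M (\<lambda>x. \<Sum>j\<in>{1..n}. (a i * a j * (c i \<bullet> c j)) * (\<phi> i x * \<phi> j x)))"
      by (rule Bochner_Integration.integral_sum) (intro Bochner_Integration.integrable_sum integrable_mult_right int, auto)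
    also have "\<dots> = (\<Sum>i\<in>{1..n}. \<Sum>j\<in>{1..n}. (a i * a j * (c i \<bullet> c j)) * (LINT x|M. \<phi> i x * \<phi> j x))"
    proof (intro sum.cong refl)
      fix i assume i: "i \<in> {1..n}"
      have "integral\<^sup>L M (\<lambda>x. \<Sum>j\<in>{1..n}. (a i * a j * (c i \<bullet> c j)) * (\<phi> i x * \<phi> j x))
         = (\<Sum>j\<in>{1..n}. integral\<^sup>L M (\<lambda>x. (a i * a j * (c i \<bullet> c j)) * (\<phi> i x * \<phi> j x)))"
        by (rule Bochner_Integration.integral_sum) (intro integrable_mult_right int i, auto)
      then show "integral\<^sup>L M (\<lambda>x. \<Sum>j\<in>{1..n}. (a i * a j * (c i \<bullet> c j)) * (\<phi> i x * \<phi> j x))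
         = (\<Sum>j\<in>{1..n}. (a i * a j * (c i \<bullet> c j)) * (LINT x|M. \<phi> i x * \<phi> j x))" by simp
    qed
    finally show ?thesis .
  qed
  also have "\<dots> = (\<Sum>i\<in>{1..n}. \<Sum>j\<in>{1..n}. (a i * a j * (c i \<bullet> c j)) * (if i = j then 1 else 0))"
    by (intro sum.cong refl) (simp add: orth)
  also have "\<dots> = (\<Sum>k\<in>{1..n}. (a k)\<^sup>2 * (norm (c k))\<^sup>2)"
    unfolding power2_norm_eq_inner by (simp add: power2_eq_square if_distrib cong: if_cong)
  finally show ?thesis unfolding pw .
qed

lemma partial_sqi:
  fixes c :: "nat \<Rightarrow> 'b::euclidean_space" and \<phi> :: "nat \<Rightarrow> 'a \<Rightarrow> real"
  assumes ob: "L2_orthonormal_basis M \<phi>"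
  shows "sq_integrable M (\<lambda>x. \<Sum>k\<in>{1..n}. (a k * \<phi> k x) *\<^sub>R c k)"
  using ob by (intro sqi_sum sqi_term) (auto simp: L2_orthonormal_basis_def)

lemma weight_ineq:
  fixes \<sigma> K :: real
  assumes "\<sigma> > 0"
  shows "0 \<le> shell_weight \<sigma> (K + 1) k - shell_weight \<sigma> K k \<and>
         shell_weight \<sigma> (K + 1) k - shell_weight \<sigma> K k \<le> (1 - exp (- \<sigma>)) * shell_weight \<sigma> (K + 1) k"
proof -
  define a where "a = exp (\<sigma> * (real k - (K + 1)))"
  define E where "E = exp \<sigma>"
  have a0: "a > 0" unfolding a_def by simp
  have E1: "E > 1" unfolding E_def using assms by simp
  have e2: "exp (\<sigma> * (real k - K)) = a * E"
    unfolding a_def E_def by (simp add: exp_add[symmetric] algebra_simps)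
  have em: "exp (- \<sigma>) = 1 / E" unfolding E_def by (simp add: exp_minus field_simps)
  have w1: "shell_weight \<sigma> (K + 1) k = 1 / (1 + a)" unfolding shell_weight_def a_def by simp
  have w0: "shell_weight \<sigma> K k = 1 / (1 + a * E)" unfolding shell_weight_def e2 by simp
  have n1: "1 + a \<noteq> 0" "1 + a * E \<noteq> 0" using a0 E1
    by (simp_all add: add_pos_pos less_imp_neq[symmetric])
  have d: "1 / (1 + a) - 1 / (1 + a * E) = a * (E - 1) / ((1 + a) * (1 + a * E))"
    using n1 by (simp add: divide_simps) (simp add: algebra_simps)
  have p1: "0 \<le> a * (E - 1) / ((1 + a) * (1 + a * E))" using a0 E1 by simp
  have "a * (E - 1) / ((1 + a) * (1 + a * E)) \<le> (1 - 1 / E) * (1 / (1 + a))"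
  proof -
    have pos: "0 < 1 + a * E" using a0 E1 by (simp add: add_pos_pos)
    have "1 / E - a / (1 + a * E) = 1 / (E * (1 + a * E))" using n1(2) E1 by (simp add: field_simps)
    moreover have "0 < 1 / (E * (1 + a * E))" using pos E1 by simp
    ultimately have r: "a / (1 + a * E) \<le> 1 / E" by linarith
    have nn: "0 \<le> (E - 1) / (1 + a)" using a0 E1 by simp
    have "a * (E - 1) / ((1 + a) * (1 + a * E)) = ((E - 1) / (1 + a)) * (a / (1 + a * E))" by simp
    also have "\<dots> \<le> ((E - 1) / (1 + a)) * (1 / E)" by (rule mult_left_mono[OF r nn])
    also have "\<dots> = (1 - 1 / E) * (1 / (1 + a))" using E1 by (simp add: field_simps)
    finally show ?thesis .
  qed
  then show ?thesis using p1 d w1 w0 em by simp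
qed

lemma L2_tri:
  fixes f g h :: "'a \<Rightarrow> 'b::euclidean_space"
  assumes "sq_integrable M f" "sq_integrable M g" "sq_integrable M h"
  shows "L2norm M (\<lambda>x. f x - h x) \<le> L2norm M (\<lambda>x. f x - g x) + L2norm M (\<lambda>x. g x - h x)"
proof -
  have "L2norm M (\<lambda>x. (f x - g x) + (g x - h x)) \<le> L2norm M (\<lambda>x. f x - g x) + L2norm M (\<lambda>x. g x - h x)"
    by (rule L2_tri_add) (use assms sqi_diff in auto)
  then show ?thesis by simp
qed

lemma L2_sym: "L2norm M (\<lambda>x. f x - g x) = L2norm M (\<lambda>x. g x - f x)"
  by (simp add: L2norm_def norm_minus_commute)

lemma partial_diff:
  "shell_partial M \<phi> \<sigma> K1 X n x - shell_partial M \<phi> \<sigma> K0 X n x =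
   (\<Sum>k\<in>{1..n}. ((shell_weight \<sigma> K1 k - shell_weight \<sigma> K0 k) * \<phi> k x) *\<^sub>R L2coef M (\<phi> k) X)"
  unfolding shell_partial_def by (simp add: sum_subtractf[symmetric] left_diff_distrib scaleR_left_diff_distrib)

lemma bigO_part: "(\<lambda>s::real. \<bar>1 - exp (- s)\<bar>) \<in> O[at_right 0](\<lambda>s. s)"
proof (rule bigoI[where c = 1])
  show "\<forall>\<^sub>F s in at_right (0::real). norm \<bar>1 - exp (- s)\<bar> \<le> 1 * norm s"
    using eventually_at_right_less[of "0::real"]
  proof (rule eventually_mono)
    fix s :: real assume s: "0 < s"
    have "exp (- s) \<le> 1" using s by simp
    moreover have "1 + (- s) \<le> exp (- s)" by (rule exp_ge_add_one_self)
    ultimately show "norm \<bar>1 - exp (- s)\<bar> \<le> 1 * norm s" using s by simp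
  qed
qed

theorem theorem1:
  fixes M :: "(real^3) measure" and \<phi> :: "nat \<Rightarrow> real^3 \<Rightarrow> real"
    and \<sigma> K :: real and S0 S1 :: "real^3 \<Rightarrow> real^3"
  assumes "finite_measure M"
    and "compact (space M)"
    and "sets M = sets (restrict_space lborel (space M))"
    and "L2_orthonormal_basis M \<phi>"
    and "\<sigma> > 0" and "K > 0"
    and "is_shell M \<phi> \<sigma> K (\<lambda>p. p) S0"
    and "is_shell M \<phi> \<sigma> (K + 1) (\<lambda>p. p) S1"
    and "L2norm M S1 \<noteq> 0"
  shows "L2norm M (\<lambda>x. S1 x - S0 x) / L2norm M S1 \<le> \<bar>1 - exp (- \<sigma>)\<bar>
         \<and> (\<lambda>s::real. \<bar>1 - exp (- s)\<bar>) \<in> O[at_right 0](\<lambda>s. s)"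
proof
  note ob = assms(4)
  define X :: "real^3 \<Rightarrow> real^3" where "X = (\<lambda>p. p)"
  define c0 where "c0 = 1 - exp (- \<sigma>)"
  have c0p: "c0 > 0" unfolding c0_def using assms(5) by simp
  define coef where "coef k = L2coef M (\<phi> k) X" for k
  define P1 where "P1 n = shell_partial M \<phi> \<sigma> (K + 1) X n" for n
  define P0 where "P0 n = shell_partial M \<phi> \<sigma> K X n" for n
  define w1 where "w1 = shell_weight \<sigma> (K + 1)"
  define w0 where "w0 = shell_weight \<sigma> K"
  have S0: "sq_integrable M S0" and S1: "sq_integrable M S1"
    and e0: "(\<lambda>n. L2norm M (\<lambda>x. S0 x - P0 n x)) \<longlonglongrightarrow> 0"
    and e1: "(\<lambda>n. L2norm M (\<lambda>x. S1 x - P1 n x)) \<longlonglongrightarrow> 0"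
    using assms(7,8) unfolding is_shell_def P0_def P1_def X_def by auto
  have P1e: "P1 n = (\<lambda>x. \<Sum>k\<in>{1..n}. (w1 k * \<phi> k x) *\<^sub>R coef k)" for n
    unfolding P1_def shell_partial_def w1_def coef_def ..
  have P0e: "P0 n = (\<lambda>x. \<Sum>k\<in>{1..n}. (w0 k * \<phi> k x) *\<^sub>R coef k)" for n
    unfolding P0_def shell_partial_def w0_def coef_def ..
  have P1s: "sq_integrable M (P1 n)" for n unfolding P1e by (rule partial_sqi[OF ob])
  have P0s: "sq_integrable M (P0 n)" for n unfolding P0e by (rule partial_sqi[OF ob])
  have L2S1: "L2norm M S1 > 0"
  proof -
    have "L2norm M S1 \<ge> 0" unfolding L2norm_def by (simp add: integral_nonneg_AE)
    then show ?thesis using assms(9) by linarith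
  qed
  have key: "L2norm M (\<lambda>x. P1 n x - P0 n x) \<le> c0 * L2norm M (P1 n)" for n
  proof -
    have dif: "(\<lambda>x. P1 n x - P0 n x) = (\<lambda>x. \<Sum>k\<in>{1..n}. ((w1 k - w0 k) * \<phi> k x) *\<^sub>R coef k)"
      unfolding P1_def P0_def w1_def w0_def coef_def by (rule ext, rule partial_diff)
    have a: "L2norm M (\<lambda>x. P1 n x - P0 n x) = sqrt (\<Sum>k\<in>{1..n}. (w1 k - w0 k)\<^sup>2 * (norm (coef k))\<^sup>2)"
      unfolding dif L2norm_def partial_sq[OF ob] ..
    have b: "L2norm M (P1 n) = sqrt (\<Sum>k\<in>{1..n}. (w1 k)\<^sup>2 * (norm (coef k))\<^sup>2)"
      unfolding P1e L2norm_def partial_sq[OF ob] ..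
    have "(\<Sum>k\<in>{1..n}. (w1 k - w0 k)\<^sup>2 * (norm (coef k))\<^sup>2) \<le> (\<Sum>k\<in>{1..n}. (c0 * w1 k)\<^sup>2 * (norm (coef k))\<^sup>2)"
    proof (rule sum_mono)
      fix k
      have h: "0 \<le> w1 k - w0 k" "w1 k - w0 k \<le> c0 * w1 k"
        using weight_ineq[OF assms(5), of K k] unfolding w1_def w0_def c0_def by auto
      have "(w1 k - w0 k)\<^sup>2 \<le> (c0 * w1 k)\<^sup>2" by (rule power_mono[OF h(2) h(1)])
      then show "(w1 k - w0 k)\<^sup>2 * (norm (coef k))\<^sup>2 \<le> (c0 * w1 k)\<^sup>2 * (norm (coef k))\<^sup>2"
        by (rule mult_right_mono) simp
    qed
    also have "\<dots> = c0\<^sup>2 * (\<Sum>k\<in>{1..n}. (w1 k)\<^sup>2 * (norm (coef k))\<^sup>2)"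
      by (simp add: sum_distrib_left power_mult_distrib algebra_simps)
    finally have "sqrt (\<Sum>k\<in>{1..n}. (w1 k - w0 k)\<^sup>2 * (norm (coef k))\<^sup>2) \<le> sqrt (c0\<^sup>2 * (\<Sum>k\<in>{1..n}. (w1 k)\<^sup>2 * (norm (coef k))\<^sup>2))"
      by (rule real_sqrt_le_mono)
    also have "\<dots> = c0 * L2norm M (P1 n)" unfolding b real_sqrt_mult using c0p by simp
    finally show ?thesis unfolding a .
  qed
  have bound: "L2norm M (\<lambda>x. S1 x - S0 x) \<le> c0 * L2norm M S1 +
      ((1 + c0) * L2norm M (\<lambda>x. S1 x - P1 n x) + L2norm M (\<lambda>x. S0 x - P0 n x))" for n
  proof -
    have t1: "L2norm M (\<lambda>x. S1 x - S0 x) \<le> L2norm M (\<lambda>x. S1 x - P1 n x) + L2norm M (\<lambda>x. P1 n x - S0 x)"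
      by (rule L2_tri[OF S1 P1s S0])
    have t2: "L2norm M (\<lambda>x. P1 n x - S0 x) \<le> L2norm M (\<lambda>x. P1 n x - P0 n x) + L2norm M (\<lambda>x. P0 n x - S0 x)"
      by (rule L2_tri[OF P1s P0s S0])
    have t3: "L2norm M (\<lambda>x. P0 n x - S0 x) = L2norm M (\<lambda>x. S0 x - P0 n x)" by (rule L2_sym)
    have t4: "L2norm M (P1 n) \<le> L2norm M (\<lambda>x. P1 n x - S1 x) + L2norm M S1"
    proof -
      have "L2norm M (\<lambda>x. (P1 n x - S1 x) + S1 x) \<le> L2norm M (\<lambda>x. P1 n x - S1 x) + L2norm M S1"
        by (rule L2_tri_add[OF sqi_diff[OF P1s S1] S1])
      then show ?thesis by simp
    qed
    have t5: "L2norm M (\<lambda>x. P1 n x - S1 x) = L2norm M (\<lambda>x. S1 x - P1 n x)" by (rule L2_sym)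
    have "c0 * L2norm M (P1 n) \<le> c0 * (L2norm M (\<lambda>x. S1 x - P1 n x) + L2norm M S1)"
      using t4 t5 c0p by simp
    moreover have "c0 * (L2norm M (\<lambda>x. S1 x - P1 n x) + L2norm M S1) = c0 * L2norm M (\<lambda>x. S1 x - P1 n x) + c0 * L2norm M S1"
      by (simp add: distrib_left)
    moreover have "(1 + c0) * L2norm M (\<lambda>x. S1 x - P1 n x) = L2norm M (\<lambda>x. S1 x - P1 n x) + c0 * L2norm M (\<lambda>x. S1 x - P1 n x)"
      by (simp add: distrib_right)
    ultimately show ?thesis using t1 t2 t3 key[of n] by linarith
  qed
  have lim: "(\<lambda>n. c0 * L2norm M S1 + ((1 + c0) * L2norm M (\<lambda>x. S1 x - P1 n x) + L2norm M (\<lambda>x. S0 x - P0 n x)))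
      \<longlonglongrightarrow> c0 * L2norm M S1 + ((1 + c0) * 0 + 0)"
    by (intro tendsto_intros e0 e1)
  have "L2norm M (\<lambda>x. S1 x - S0 x) \<le> c0 * L2norm M S1 + ((1 + c0) * 0 + 0)"
    by (rule LIMSEQ_le_const[OF lim]) (use bound in blast)
  then have "L2norm M (\<lambda>x. S1 x - S0 x) / L2norm M S1 \<le> c0"
    using L2S1 by (simp add: divide_le_eq)
  then show "L2norm M (\<lambda>x. S1 x - S0 x) / L2norm M S1 \<le> \<bar>1 - exp (- \<sigma>)\<bar>"
    using c0p unfolding c0_def by simp
next
  show "(\<lambda>s::real. \<bar>1 - exp (- s)\<bar>) \<in> O[at_right 0](\<lambda>s. s)" by (rule bigO_part)
qed

end
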